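(* Let $\mathcal G$ be an étale groupoid, $A$ a right $\mathcal G$-space and $B$ a left $\mathcal G$-space. If the $\mathcal G$-action on $A$ is proper and $B$ is Hausdorff, then the diagonal $\mathcal G$-action on $A\times_{s,\mathcal G^0,r}B$ defined by $g\cdot(a,b)=(a\cdot g^{-1},g\cdot b)$ (for $s(g)=s(a)=r(b)$) is proper.
   Context: An étale groupoid: topologies on arrow space $\mathcal G$ and object space $\mathcal G^0$ with $r,s$ local homeomorphisms and continuous multiplication and inversion. A right $\mathcal G$-space: space with continuous anchor $s$ and continuous action $(x,g)\mapsto xg$ defined when $s(x)=r(g)$, with $s(xg)=s(g)$, $(xg_1)g_2=x(g_1g_2)$, $x\,s(x)=x$; left spaces analogously with anchor $r$. A continuous map $f$ is proper if $f\times\mathrm{id}_Z$ is closed for every topological space $Z$. A right action on $A$ is proper if $A\times_{s,\mathcal G^0,r}\mathcal G\to A\times A$, $(a,g)\mapsto(ag,a)$, is proper; the diagonal (left) action on $W=A\times_{s,\mathcal G^0,r}B$, with anchor $(a,b)\mapsto s(a)=r(b)$, is proper if $\{(g,w)\in\mathcal G\times W: s(g)=\text{anchor}(w)\}\to W\times W$, $(g,w)\mapsto(g\cdot w,w)$, is proper. *)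

theory Defs
  imports "HOL-Analysis.Analysis"
begin

definition local_homeomorphism_map :: "'a topology \<Rightarrow> 'b topology \<Rightarrow> ('a \<Rightarrow> 'b) \<Rightarrow> bool" where
  "local_homeomorphism_map X Y f \<longleftrightarrow>
     continuous_map X Y f \<and>
     (\<forall>x\<in>topspace X. \<exists>V. openin X V \<and> x \<in> V \<and> openin Y (f ` V) \<and>
        homeomorphic_map (subtopology X V) (subtopology Y (f ` V)) f)"

definition groupoid :: "'g topology \<Rightarrow> 'g set \<Rightarrow> ('g \<Rightarrow> 'g) \<Rightarrow> ('g \<Rightarrow> 'g)
    \<Rightarrow> ('g \<Rightarrow> 'g \<Rightarrow> 'g) \<Rightarrow> ('g \<Rightarrow> 'g) \<Rightarrow> bool" where
  "groupoid T G0 r s m i \<longleftrightarrow>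
     G0 \<subseteq> topspace T \<and>
     (\<forall>u\<in>G0. r u = u \<and> s u = u) \<and>
     (\<forall>g\<in>topspace T. r g \<in> G0 \<and> s g \<in> G0 \<and> i g \<in> topspace T \<and>
        r (i g) = s g \<and> s (i g) = r g \<and>
        m g (i g) = r g \<and> m (i g) g = s g \<and> m (r g) g = g \<and> m g (s g) = g) \<and>
     (\<forall>g\<in>topspace T. \<forall>h\<in>topspace T. s g = r h \<longrightarrow>
        m g h \<in> topspace T \<and> r (m g h) = r g \<and> s (m g h) = s h) \<and>
     (\<forall>g\<in>topspace T. \<forall>h\<in>topspace T. \<forall>k\<in>topspace T. s g = r h \<longrightarrow> s h = r k \<longrightarrow>
        m (m g h) k = m g (m h k))"

definition etale_groupoid :: "'g topology \<Rightarrow> 'g set \<Rightarrow> ('g \<Rightarrow> 'g) \<Rightarrow> ('g \<Rightarrow> 'g)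
    \<Rightarrow> ('g \<Rightarrow> 'g \<Rightarrow> 'g) \<Rightarrow> ('g \<Rightarrow> 'g) \<Rightarrow> bool" where
  "etale_groupoid T G0 r s m i \<longleftrightarrow>
     groupoid T G0 r s m i \<and>
     local_homeomorphism_map T (subtopology T G0) r \<and>
     local_homeomorphism_map T (subtopology T G0) s \<and>
     continuous_map (subtopology (prod_topology T T) {(g, h). s g = r h}) T (\<lambda>(g, h). m g h) \<and>
     continuous_map T T i"

definition right_G_space :: "'g topology \<Rightarrow> 'g set \<Rightarrow> ('g \<Rightarrow> 'g) \<Rightarrow> ('g \<Rightarrow> 'g)
    \<Rightarrow> ('g \<Rightarrow> 'g \<Rightarrow> 'g) \<Rightarrow> 'a topology \<Rightarrow> ('a \<Rightarrow> 'g) \<Rightarrow> ('a \<Rightarrow> 'g \<Rightarrow> 'a) \<Rightarrow> bool" where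
  "right_G_space T G0 r s m X sA act \<longleftrightarrow>
     continuous_map X (subtopology T G0) sA \<and>
     continuous_map (subtopology (prod_topology X T) {(x, g). sA x = r g}) X (\<lambda>(x, g). act x g) \<and>
     (\<forall>x\<in>topspace X. \<forall>g\<in>topspace T. sA x = r g \<longrightarrow> sA (act x g) = s g) \<and>
     (\<forall>x\<in>topspace X. \<forall>g\<in>topspace T. \<forall>h\<in>topspace T. sA x = r g \<longrightarrow> s g = r h \<longrightarrow>
        act (act x g) h = act x (m g h)) \<and>
     (\<forall>x\<in>topspace X. act x (sA x) = x)"

definition left_G_space :: "'g topology \<Rightarrow> 'g set \<Rightarrow> ('g \<Rightarrow> 'g) \<Rightarrow> ('g \<Rightarrow> 'g)
    \<Rightarrow> ('g \<Rightarrow> 'g \<Rightarrow> 'g) \<Rightarrow> 'b topology \<Rightarrow> ('b \<Rightarrow> 'g) \<Rightarrow> ('g \<Rightarrow> 'b \<Rightarrow> 'b) \<Rightarrow> bool" where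
  "left_G_space T G0 r s m Y rB act \<longleftrightarrow>
     continuous_map Y (subtopology T G0) rB \<and>
     continuous_map (subtopology (prod_topology T Y) {(g, y). s g = rB y}) Y (\<lambda>(g, y). act g y) \<and>
     (\<forall>y\<in>topspace Y. \<forall>g\<in>topspace T. s g = rB y \<longrightarrow> rB (act g y) = r g) \<and>
     (\<forall>y\<in>topspace Y. \<forall>g\<in>topspace T. \<forall>h\<in>topspace T. s h = rB y \<longrightarrow> s g = r h \<longrightarrow>
        act g (act h y) = act (m g h) y) \<and>
     (\<forall>y\<in>topspace Y. act (rB y) y = y)"

definition proper_right_action :: "'g topology \<Rightarrow> ('g \<Rightarrow> 'g)
    \<Rightarrow> 'a topology \<Rightarrow> ('a \<Rightarrow> 'g) \<Rightarrow> ('a \<Rightarrow> 'g \<Rightarrow> 'a) \<Rightarrow> bool" where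
  "proper_right_action T r X sA act \<longleftrightarrow>
     proper_map (subtopology (prod_topology X T) {(a, g). sA a = r g})
                (prod_topology X X) (\<lambda>(a, g). (act a g, a))"

definition fibre_prod_top :: "'a topology \<Rightarrow> ('a \<Rightarrow> 'g) \<Rightarrow> 'b topology \<Rightarrow> ('b \<Rightarrow> 'g)
    \<Rightarrow> ('a \<times> 'b) topology" where
  "fibre_prod_top X sA Y rB = subtopology (prod_topology X Y) {(a, b). sA a = rB b}"

definition diagonal_action :: "('g \<Rightarrow> 'g) \<Rightarrow> ('a \<Rightarrow> 'g \<Rightarrow> 'a) \<Rightarrow> ('g \<Rightarrow> 'b \<Rightarrow> 'b)
    \<Rightarrow> 'g \<Rightarrow> 'a \<times> 'b \<Rightarrow> 'a \<times> 'b" where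
  "diagonal_action i actA actB g w = (actA (fst w) (i g), actB g (snd w))"

definition proper_diagonal_action :: "'g topology \<Rightarrow> ('g \<Rightarrow> 'g) \<Rightarrow> ('g \<Rightarrow> 'g)
    \<Rightarrow> 'a topology \<Rightarrow> ('a \<Rightarrow> 'g) \<Rightarrow> ('a \<Rightarrow> 'g \<Rightarrow> 'a)
    \<Rightarrow> 'b topology \<Rightarrow> ('b \<Rightarrow> 'g) \<Rightarrow> ('g \<Rightarrow> 'b \<Rightarrow> 'b) \<Rightarrow> bool" where
  "proper_diagonal_action T s i X sA actA Y rB actB \<longleftrightarrow>
     proper_map (subtopology (prod_topology T (fibre_prod_top X sA Y rB)) {(g, w). s g = sA (fst w)})
                (prod_topology (fibre_prod_top X sA Y rB) (fibre_prod_top X sA Y rB))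
                (\<lambda>(g, w). (diagonal_action i actA actB g w, w))"

end

theory Submission imports Defs begin

lemma proper_map_cong:
  assumes "proper_map X Y f" "\<And>x. x \<in> topspace X \<Longrightarrow> f x = g x"
  shows "proper_map X Y g"
proof -
  have "closed_map X Y g" using assms closed_map_eq proper_imp_closed_map by blast
  moreover have "{x \<in> topspace X. g x = y} = {x \<in> topspace X. f x = y}" for y
    using assms(2) by auto
  ultimately show ?thesis using assms(1) unfolding proper_map_def by simp
qed

lemma cont_comp2:
  assumes "continuous_map D (subtopology (prod_topology X T) S) (\<lambda>x. (f x, g x))"
    "continuous_map (subtopology (prod_topology X T) S) Y (\<lambda>(a,b). h a b)"
  shows "continuous_map D Y (\<lambda>x. h (f x) (g x))"
  using continuous_map_compose[OF assms] by (simp add: o_def)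

lemma cont_fst_snd: "continuous_map (subtopology (prod_topology T (subtopology (prod_topology X Y) S)) S') X (\<lambda>x. fst (snd x))"
  using continuous_map_compose[OF continuous_map_subtopology_snd continuous_map_subtopology_fst]
  by (simp add: o_def)
lemma cont_snd_snd: "continuous_map (subtopology (prod_topology T (subtopology (prod_topology X Y) S)) S') Y (\<lambda>x. snd (snd x))"
  using continuous_map_compose[OF continuous_map_subtopology_snd continuous_map_subtopology_snd]
  by (simp add: o_def)
lemma cont_fst_fst: "continuous_map (subtopology (prod_topology (subtopology (prod_topology X Y) S) T) S') X (\<lambda>x. fst (fst x))"
  using continuous_map_compose[OF continuous_map_subtopology_fst continuous_map_subtopology_fst]
  by (simp add: o_def)
lemma cont_snd_fst: "continuous_map (subtopology (prod_topology (subtopology (prod_topology X Y) S) T) S') Y (\<lambda>x. snd (fst x))"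
  using continuous_map_compose[OF continuous_map_subtopology_fst continuous_map_subtopology_snd]
  by (simp add: o_def)

lemma cfst: "continuous_map A (prod_topology B C) f \<Longrightarrow> continuous_map A B (\<lambda>x. fst (f x))"
  using continuous_map_fst_of by (simp add: o_def continuous_map_pairwise)
lemma csnd: "continuous_map A (prod_topology B C) f \<Longrightarrow> continuous_map A C (\<lambda>x. snd (f x))"
  using continuous_map_fst_of by (simp add: o_def continuous_map_pairwise)
lemma cid: "continuous_map A A (\<lambda>x. x)"
  using continuous_map_id[unfolded id_def] .

lemma rearr_homeo:
  "homeomorphic_map (prod_topology (prod_topology (prod_topology X X) Y) Y)
     (prod_topology (prod_topology X Y) (prod_topology X Y))
     (\<lambda>z. ((fst (fst (fst z)), snd z), (snd (fst (fst z)), snd (fst z))))"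
  unfolding homeomorphic_map_maps
proof (intro exI[of _ "\<lambda>q. (((fst (fst q), fst (snd q)), snd (snd q)), snd (fst q))"])
  show "homeomorphic_maps (prod_topology (prod_topology (prod_topology X X) Y) Y)
     (prod_topology (prod_topology X Y) (prod_topology X Y))
     (\<lambda>z. ((fst (fst (fst z)), snd z), (snd (fst (fst z)), snd (fst z))))
     (\<lambda>q. (((fst (fst q), fst (snd q)), snd (snd q)), snd (fst q)))"
    unfolding homeomorphic_maps_def
    by (auto intro!: continuous_map_pairedI) (rule cfst csnd cid)+
qed

theorem lemma5p2:
  fixes T :: "'g topology" and G0 :: "'g set"
    and r s i :: "'g \<Rightarrow> 'g" and m :: "'g \<Rightarrow> 'g \<Rightarrow> 'g"
    and X :: "'a topology" and sA :: "'a \<Rightarrow> 'g" and actA :: "'a \<Rightarrow> 'g \<Rightarrow> 'a"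
    and Y :: "'b topology" and rB :: "'b \<Rightarrow> 'g" and actB :: "'g \<Rightarrow> 'b \<Rightarrow> 'b"
  assumes "etale_groupoid T G0 r s m i"
    and "right_G_space T G0 r s m X sA actA"
    and "left_G_space T G0 r s m Y rB actB"
    and "proper_right_action T r X sA actA"
    and "Hausdorff_space Y"
  shows "proper_diagonal_action T s i X sA actA Y rB actB"
proof -
  have gp: "groupoid T G0 r s m i" and contI: "continuous_map T T i"
    using assms(1) unfolding etale_groupoid_def by auto
  have iT: "\<And>g. g \<in> topspace T \<Longrightarrow> i g \<in> topspace T"
    and ri: "\<And>g. g \<in> topspace T \<Longrightarrow> r (i g) = s g"
    and si: "\<And>g. g \<in> topspace T \<Longrightarrow> s (i g) = r g"
    and mi1: "\<And>g. g \<in> topspace T \<Longrightarrow> m g (i g) = r g"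
    and mi2: "\<And>g. g \<in> topspace T \<Longrightarrow> m (i g) g = s g"
    using gp unfolding groupoid_def by auto
  have contA: "continuous_map (subtopology (prod_topology X T) {(x, g). sA x = r g}) X (\<lambda>(x, g). actA x g)"
    and sAact: "\<And>x g. x \<in> topspace X \<Longrightarrow> g \<in> topspace T \<Longrightarrow> sA x = r g \<Longrightarrow> sA (actA x g) = s g"
    and Aassoc: "\<And>x g h. x \<in> topspace X \<Longrightarrow> g \<in> topspace T \<Longrightarrow> h \<in> topspace T \<Longrightarrow> sA x = r g \<Longrightarrow> s g = r h \<Longrightarrow>
        actA (actA x g) h = actA x (m g h)"
    and Aunit: "\<And>x. x \<in> topspace X \<Longrightarrow> actA x (sA x) = x"
    using assms(2) unfolding right_G_space_def by auto
  have contB: "continuous_map (subtopology (prod_topology T Y) {(g, y). s g = rB y}) Y (\<lambda>(g, y). actB g y)"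
    using assms(3) unfolding left_G_space_def by auto
  have sBact: "\<And>y g. y \<in> topspace Y \<Longrightarrow> g \<in> topspace T \<Longrightarrow> s g = rB y \<Longrightarrow> rB (actB g y) = r g"
    using assms(3) unfolding left_G_space_def by auto
  have actBY: "\<And>y g. y \<in> topspace Y \<Longrightarrow> g \<in> topspace T \<Longrightarrow> s g = rB y \<Longrightarrow> actB g y \<in> topspace Y"
    using continuous_map_image_subset_topspace[OF contB] by fastforce
  have actAX: "\<And>x g. x \<in> topspace X \<Longrightarrow> g \<in> topspace T \<Longrightarrow> sA x = r g \<Longrightarrow> actA x g \<in> topspace X"
    using continuous_map_image_subset_topspace[OF contA] by fastforce
  define P where "P = subtopology (prod_topology X T) {(a, g). sA a = r g}"
  define W where "W = fibre_prod_top X sA Y rB"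
  define Sd where "Sd = {(g, w::'a\<times>'b). s g = sA (fst w)}"
  define D where "D = subtopology (prod_topology T W) Sd"
  define S' where "S' = {((a::'a, h), b). s h = rB b}"
  define D' where "D' = subtopology (prod_topology P Y) S'"
  define Z where "Z = prod_topology (prod_topology X X) Y"
  define V where "V = {((a1::'a, a::'a), b::'b). sA a = rB b}"
  define Ws where "Ws = {(a::'a, b). sA a = rB b}"
  define k where "k = (\<lambda>x::'g\<times>'a\<times>'b. ((actA (fst (snd x)) (i (fst x)), fst x), snd (snd x)))"
  define k' where "k' = (\<lambda>y::('a\<times>'g)\<times>'b. (snd (fst y), (actA (fst (fst y)) (snd (fst y)), snd y)))"
  define F' where "F' = (\<lambda>y::('a\<times>'g)\<times>'b. ((fst (fst y), actA (fst (fst y)) (snd (fst y))), snd y))"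
  define G where "G = (\<lambda>x::'g\<times>'a\<times>'b. actB (fst x) (snd (snd x)))"
  define R where "R = (\<lambda>z::(('a \<times> 'a) \<times> 'b) \<times> 'b. ((fst (fst (fst z)), snd z), (snd (fst (fst z)), snd (fst z))))"
  have bkA: "\<And>a g. a \<in> topspace X \<Longrightarrow> g \<in> topspace T \<Longrightarrow> s g = sA a \<Longrightarrow> actA (actA a (i g)) g = a"
    using Aassoc iT ri si mi2 Aunit by metis
  have bkB: "\<And>a h. a \<in> topspace X \<Longrightarrow> h \<in> topspace T \<Longrightarrow> sA a = r h \<Longrightarrow> actA (actA a h) (i h) = a"
    using Aassoc iT ri si mi1 Aunit by metis
  have tD: "topspace D = {(g, (a, b)). g \<in> topspace T \<and> a \<in> topspace X \<and> b \<in> topspace Y \<and> sA a = rB b \<and> s g = sA a}"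
    unfolding D_def W_def fibre_prod_top_def Sd_def by auto
  have tD': "topspace D' = {((a, h), b). a \<in> topspace X \<and> h \<in> topspace T \<and> b \<in> topspace Y \<and> sA a = r h \<and> s h = rB b}"
    unfolding D'_def P_def S'_def by auto
  have pra: "proper_map P (prod_topology X X) (\<lambda>(a, g). (actA a g, a))"
    using assms(4) unfolding proper_right_action_def P_def .
  have f_prop: "proper_map P (prod_topology X X) (\<lambda>p. (fst p, actA (fst p) (snd p)))"
    by (rule proper_map_cong[OF proper_map_compose[OF pra homeomorphic_imp_proper_map[OF homeomorphic_map_swap]]])
       auto
  have F'_prop: "proper_map (prod_topology P Y) Z F'"
  proof -
    have "proper_map (prod_topology P Y) Z (\<lambda>(x,y). ((\<lambda>p. (fst p, actA (fst p) (snd p))) x, id y))"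
      unfolding Z_def by (rule proper_map_prod[THEN iffD2]) (simp add: f_prop proper_map_id[unfolded id_def])
    then show ?thesis
      by (rule proper_map_cong) (auto simp: F'_def)
  qed
  have F'_res: "proper_map D' (subtopology Z V) F'"
  proof -
    have "{x \<in> topspace (prod_topology P Y). F' x \<in> V} = topspace (prod_topology P Y) \<inter> S'"
      unfolding P_def F'_def V_def S'_def by (auto simp: sAact)
    from proper_map_restriction[OF F'_prop this] show ?thesis
      unfolding D'_def subtopology_restrict .
  qed
  have c1: "continuous_map D (subtopology (prod_topology X T) {(x, g). sA x = r g}) (\<lambda>x. (fst (snd x), i (fst x)))"
    unfolding continuous_map_in_subtopology
  proof (intro conjI continuous_map_pairedI)
    show "continuous_map D X (\<lambda>x. fst (snd x))"
      unfolding D_def W_def fibre_prod_top_def by (rule cont_fst_snd)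
    show "continuous_map D T (\<lambda>x. i (fst x))"
      using continuous_map_compose[OF continuous_map_subtopology_fst contI] unfolding D_def by (simp add: o_def)
    show "(\<lambda>x. (fst (snd x), i (fst x))) \<in> topspace D \<rightarrow> {(x, g). sA x = r g}"
      unfolding tD by (auto simp: ri)
  qed
  have kA: "continuous_map D X (\<lambda>x. actA (fst (snd x)) (i (fst x)))"
    by (rule cont_comp2[OF c1 contA])
  have kD': "\<And>x. x \<in> topspace D \<Longrightarrow> k x \<in> topspace D'"
    unfolding tD tD' k_def by (auto simp: ri si sAact actAX iT)
  have k'D: "\<And>y. y \<in> topspace D' \<Longrightarrow> k' y \<in> topspace D"
    unfolding tD tD' k'_def by (auto simp: sAact actAX)
  have k_homeo: "homeomorphic_maps D D' k k'"
    unfolding homeomorphic_maps_def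
  proof (intro conjI ballI)
    show "continuous_map D D' k"
      unfolding D'_def continuous_map_in_subtopology
    proof (intro conjI)
      show "continuous_map D (prod_topology P Y) k"
        unfolding k_def P_def
      proof (intro continuous_map_pairedI)
        show "continuous_map D (subtopology (prod_topology X T) {(a, g). sA a = r g})
          (\<lambda>x. (actA (fst (snd x)) (i (fst x)), fst x))"
          unfolding continuous_map_in_subtopology
        proof (intro conjI continuous_map_pairedI kA)
          show "continuous_map D T fst" unfolding D_def by (rule continuous_map_subtopology_fst)
          show "(\<lambda>x. (actA (fst (snd x)) (i (fst x)), fst x)) \<in> topspace D \<rightarrow> {(a, g). sA a = r g}"
            unfolding tD by (auto simp: ri si sAact iT)
        qed
        show "continuous_map D Y (\<lambda>x. snd (snd x))"
          unfolding D_def W_def fibre_prod_top_def by (rule cont_snd_snd)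
      qed
      show "k \<in> topspace D \<rightarrow> S'"
        using kD' unfolding D'_def by auto
    qed
    show "continuous_map D' D k'"
      unfolding D_def continuous_map_in_subtopology
    proof (intro conjI)
      have cW: "continuous_map D' W (\<lambda>x. (actA (fst (fst x)) (snd (fst x)), snd x))"
        unfolding W_def fibre_prod_top_def continuous_map_in_subtopology
      proof (intro conjI continuous_map_pairedI)
        show "continuous_map D' Y snd"
          unfolding D'_def by (rule continuous_map_subtopology_snd)
        have "continuous_map D' X ((\<lambda>(x, g). actA x g) \<circ> fst)"
          using continuous_map_compose[OF continuous_map_subtopology_fst contA] unfolding D'_def P_def .
        then show "continuous_map D' X (\<lambda>x. actA (fst (fst x)) (snd (fst x)))"
          by (simp add: o_def case_prod_beta)
        show "(\<lambda>x. (actA (fst (fst x)) (snd (fst x)), snd x)) \<in> topspace D' \<rightarrow> {(a, b). sA a = rB b}"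
          unfolding tD' by (auto simp: sAact)
      qed
      have cT: "continuous_map D' T (\<lambda>x. snd (fst x))"
        unfolding D'_def P_def by (rule cont_snd_fst)
      show "continuous_map D' (prod_topology T W) k'"
        unfolding k'_def by (rule continuous_map_pairedI[OF cT cW])
      show "k' \<in> topspace D' \<rightarrow> Sd"
        using k'D unfolding D_def by auto
    qed
    show "k' (k x) = x" if "x \<in> topspace D" for x
      using that unfolding tD k_def k'_def by (auto simp: bkA)
    show "k (k' y) = y" if "y \<in> topspace D'" for y
      using that unfolding tD' k_def k'_def by (auto simp: bkB)
  qed
  have Fk_prop: "proper_map D (subtopology Z V) (F' \<circ> k)"
  proof -
    have "homeomorphic_map D D' k" using k_homeo homeomorphic_map_maps by blast
    from proper_map_compose[OF homeomorphic_imp_proper_map[OF this] F'_res] show ?thesis .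
  qed
  have G_cont: "continuous_map D Y G"
    unfolding G_def
  proof (rule cont_comp2[OF _ contB])
    show "continuous_map D (subtopology (prod_topology T Y) {(g, y). s g = rB y}) (\<lambda>x. (fst x, snd (snd x)))"
      unfolding continuous_map_in_subtopology
    proof (intro conjI continuous_map_pairedI)
      show "continuous_map D T fst" unfolding D_def by (rule continuous_map_subtopology_fst)
      show "continuous_map D Y (\<lambda>x. snd (snd x))"
        unfolding D_def W_def fibre_prod_top_def by (rule cont_snd_snd)
      show "(\<lambda>x. (fst x, snd (snd x))) \<in> topspace D \<rightarrow> {(g, y). s g = rB y}"
        unfolding tD by auto
    qed
  qed
  have pair_prop: "proper_map D (prod_topology (subtopology Z V) Y) (\<lambda>x. ((F' \<circ> k) x, G x))"
    apply (rule proper_map_paired) using assms(5) Fk_prop G_cont by (simp add: o_def)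
  define U2 where "U2 = {x \<in> topspace (prod_topology Z Y). R x \<in> Ws \<times> Ws}"
  have pair_prop2: "proper_map D (subtopology (prod_topology Z Y) U2) (\<lambda>x. ((F' \<circ> k) x, G x))"
  proof -
    have "proper_map D (subtopology (prod_topology Z Y) (V \<times> topspace Y)) (\<lambda>x. ((F' \<circ> k) x, G x))"
      using pair_prop unfolding prod_topology_subtopology .
    then have "proper_map D (subtopology (subtopology (prod_topology Z Y) (V \<times> topspace Y)) U2) (\<lambda>x. ((F' \<circ> k) x, G x))"
    proof (rule proper_map_into_subtopology)
      show "(\<lambda>x. ((F' \<circ> k) x, G x)) \<in> topspace D \<rightarrow> U2"
        unfolding tD U2_def Z_def R_def Ws_def F'_def k_def G_def
        by (auto simp: ri si sAact actAX iT bkA actBY sBact)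
    qed
    moreover have "(V \<times> topspace Y) \<inter> U2 = U2" unfolding U2_def V_def Z_def R_def Ws_def by auto
    ultimately show ?thesis by (simp add: subtopology_subtopology)
  qed
  have R_prop: "proper_map (subtopology (prod_topology Z Y) U2) (prod_topology W W) R"
  proof -
    have "proper_map (prod_topology Z Y) (prod_topology (prod_topology X Y) (prod_topology X Y)) R"
      unfolding Z_def R_def by (rule homeomorphic_imp_proper_map[OF rearr_homeo])
    from proper_map_restriction[OF this U2_def[symmetric]] show ?thesis
      unfolding W_def fibre_prod_top_def subtopology_Times Ws_def .
  qed
  have fin: "proper_map D (prod_topology W W) (R \<circ> (\<lambda>x. ((F' \<circ> k) x, G x)))"
    by (rule proper_map_compose[OF pair_prop2 R_prop])
  show ?thesis
  proof -
    have eq: "subtopology (prod_topology T W) {(g, w). s g = sA (fst w)} = D"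
      by (simp add: D_def Sd_def)
    show ?thesis
      unfolding proper_diagonal_action_def W_def[symmetric] eq
      by (rule proper_map_cong[OF fin])
        (auto simp: tD diagonal_action_def R_def F'_def k_def G_def bkA)
  qed
qed

end
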